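(* Let $g\geqslant2$ be even and $u\in\mathbb{C}[\alpha,\gamma]$. If $\gamma^2u\in J_g^+$, then $u\in J_{g-4}^+$.
   Context: $\zeta_k^+\in\mathbb{C}[\alpha,\gamma]$: $\zeta^+_i=0$ for $i<0$, $\zeta^+_0=1$, $\zeta^+_{k+1}=\alpha\zeta^+_k+16k^2\zeta^+_{k-1}+2k(k-1)\gamma\zeta^+_{k-2}$ for $k$ even and $\zeta^+_{k+1}=\alpha\zeta^+_k+2k(k-1)\gamma\zeta^+_{k-2}$ for $k$ odd ($k\geqslant0$); $J^+_k=(\zeta^+_k,\zeta^+_{k+1},\zeta^+_{k+2})$ for all integers $k$ (so $J_k^+=(1)$ for $k\leqslant -2$). *)

theory Defs
  imports Complex_Main "HOL-Computational_Algebra.Polynomial"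
begin

text \<open>The ring C[alpha, gamma] is modelled as (C[alpha])[gamma], i.e. complex poly poly:
  the outer variable is gamma, the inner variable is alpha.\<close>

definition alpha :: "complex poly poly" where
  "alpha = [: [:0, 1:] :]"

definition gamma :: "complex poly poly" where
  "gamma = [:0, 1:]"

fun zeta_nat :: "nat \<Rightarrow> complex poly poly" where
  "zeta_nat 0 = 1"
| "zeta_nat (Suc k) =
     alpha * zeta_nat k
     + (if even k \<and> k \<ge> 1 then of_nat (16 * k^2) * zeta_nat (k - 1) else 0)
     + (if k \<ge> 2 then of_nat (2 * k * (k - 1)) * gamma * zeta_nat (k - 2) else 0)"

definition zeta :: "int \<Rightarrow> complex poly poly" where
  "zeta k = (if k < 0 then 0 else zeta_nat (nat k))"

definition J :: "int \<Rightarrow> complex poly poly set" where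
  "J k = {a * zeta k + b * zeta (k + 1) + c * zeta (k + 2) | a b c. True}"

end

theory Submission
  imports Defs
begin

definition K :: "complex \<Rightarrow> complex poly poly" where "K c = [:[:c:]:]"

lemma K_add: "K (a + b) = K a + K b" by (simp add: K_def)
lemma K_mult: "K (a * b) = K a * K b" by (simp add: K_def)
lemma K_0[simp]: "K 0 = 0" by (simp add: K_def)
lemma K_1[simp]: "K 1 = 1" by (simp add: K_def one_pCons)
lemma K_minus: "K (- a) = - K a" by (simp add: K_def)
lemma K_diff: "K (a - b) = K a - K b" by (simp add: K_def)
lemma K_of_nat: "K (of_nat n) = of_nat n"
  by (induction n) (simp_all add: K_add)
lemma K_of_int: "K (of_int n) = of_int n"
  by (cases n) (simp_all add: K_minus K_of_nat K_diff)
lemma K_inv: "c \<noteq> 0 \<Longrightarrow> K (1/c) * K c = 1"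
  by (simp add: K_mult[symmetric])

lemma zrec: "zeta_nat (Suc k) = alpha * zeta_nat k + (if even k then of_nat (16*k^2) else 0) * zeta_nat (k-1) + of_nat (2*k*(k-1)) * gamma * zeta_nat (k-2)"
proof (cases "k < 2")
  case True
  then have "k = 0 \<or> k = 1" by auto
  then show ?thesis by auto
qed simp

lemma J_mem: "x \<in> J k \<longleftrightarrow> (\<exists>a b c. x = a * zeta k + b * zeta (k+1) + c * zeta (k+2))"
  unfolding J_def by blast

lemma J_add: "x \<in> J k \<Longrightarrow> y \<in> J k \<Longrightarrow> x + y \<in> J k"
proof -
  assume "x \<in> J k" "y \<in> J k"
  then obtain a b c a' b' c' where "x = a * zeta k + b * zeta (k+1) + c * zeta (k+2)"
    "y = a' * zeta k + b' * zeta (k+1) + c' * zeta (k+2)" unfolding J_mem by blast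
  then have "x + y = (a+a') * zeta k + (b+b') * zeta (k+1) + (c+c') * zeta (k+2)"
    by (simp add: algebra_simps)
  then show ?thesis unfolding J_mem by blast
qed

lemma J_mult: "x \<in> J k \<Longrightarrow> r * x \<in> J k"
proof -
  assume "x \<in> J k"
  then obtain a b c where "x = a * zeta k + b * zeta (k+1) + c * zeta (k+2)"
    unfolding J_mem by blast
  then have "r * x = (r*a) * zeta k + (r*b) * zeta (k+1) + (r*c) * zeta (k+2)"
    by (simp add: algebra_simps)
  then show ?thesis unfolding J_mem by blast
qed

lemma J_mult2: "x \<in> J k \<Longrightarrow> x * r \<in> J k"
  using J_mult[of x k r] by (simp add: mult.commute)

lemma J_zero: "0 \<in> J k"
  unfolding J_mem by (rule exI[of _ 0], rule exI[of _ 0], rule exI[of _ 0]) simp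

lemma J_uminus: "x \<in> J k \<Longrightarrow> - x \<in> J k"
  using J_mult[of x k "-1"] by simp

lemma J_diff: "x \<in> J k \<Longrightarrow> y \<in> J k \<Longrightarrow> x - y \<in> J k"
  using J_add[of x k "-y"] J_uminus[of y k] by simp

lemma J_g0: "zeta k \<in> J k" unfolding J_mem by (rule exI[of _ 1], rule exI[of _ 0], rule exI[of _ 0]) simp
lemma J_g1: "zeta (k+1) \<in> J k" unfolding J_mem by (rule exI[of _ 0], rule exI[of _ 1], rule exI[of _ 0]) simp
lemma J_g2: "zeta (k+2) \<in> J k" unfolding J_mem by (rule exI[of _ 0], rule exI[of _ 0], rule exI[of _ 1]) simp

lemma zeta_nat_int: "zeta (int n) = zeta_nat n" by (simp add: zeta_def)

lemma zeta_in_J: "n \<le> j \<Longrightarrow> zeta_nat j \<in> J (int n)"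
proof (induction j rule: less_induct)
  case (less j)
  show ?case
  proof (cases "j \<le> n + 2")
    case True
    then have "j = n \<or> j = n + 1 \<or> j = n + 2" using less.prems by auto
    then show ?thesis using J_g0[of "int n"] J_g1[of "int n"] J_g2[of "int n"]
      by (auto simp: zeta_nat_int[symmetric] add.commute)
  next
    case False
    then obtain k where k: "j = Suc k" "n + 2 \<le> k" by (cases j) auto
    have "zeta_nat k \<in> J (int n)" "zeta_nat (k-1) \<in> J (int n)" "zeta_nat (k-2) \<in> J (int n)"
      using less.IH k by auto
    then show ?thesis unfolding k(1) zrec
      by (intro J_add J_mult) auto
  qed
qed

definition cc :: "nat \<Rightarrow> complex" where "cc n = 1 / (of_nat (fact n) * 4 ^ n)"

definition y :: "int \<Rightarrow> complex poly poly" where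
  "y j = (if j < 0 then 0 else K (cc (nat j)) * zeta_nat (nat j))"

lemma y_nat: "y (int n) = K (cc n) * zeta_nat n" by (simp add: y_def)

lemma cc_nz: "cc n \<noteq> 0" by (simp add: cc_def)

lemma cc_Suc: "cc (Suc n) = cc n / (4 * of_nat (Suc n))"
  by (simp add: cc_def field_simps)


lemma K_numeral: "K (numeral n) = numeral n"
proof -
  have "K (numeral n) = K (of_nat (numeral n))" by simp
  also have "\<dots> = of_nat (numeral n)" by (rule K_of_nat)
  finally show ?thesis by simp
qed

lemma yrec32: "32 * of_nat (n+1) * y (int n + 1) = 8 * alpha * y (int n)
   + (if even n then 32 * of_nat n * y (int n - 1) else 0) + gamma * y (int n - 2)"
proof -
  consider "n = 0" | "n = 1" | p where "n = Suc (Suc p)" by (cases n; cases "n - 1") auto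
  then show ?thesis
  proof cases
    case 1
    have "32 * K (1/4) = (8 :: complex poly poly)"
      by (simp add: K_numeral[symmetric] K_mult[symmetric])
    then show ?thesis using 1 by (simp add: y_def cc_def algebra_simps)
  next
    case 2
    have "64 * K (1/32) = (8 * K (1/4) :: complex poly poly)"
      by (simp add: K_numeral[symmetric] K_mult[symmetric])
    then show ?thesis using 2
      by (simp add: y_def cc_def algebra_simps numeral_2_eq_2)
  next
    case 3
    have e1: "int n + 1 = int (Suc n)" "int n - 1 = int (Suc p)" "int n - 2 = int p" using 3 by auto
    have nz: "(of_nat (Suc p) :: complex) \<noteq> 0" "(of_nat (Suc (Suc p)) :: complex) \<noteq> 0"
      "(of_nat (Suc (Suc (Suc p))) :: complex) \<noteq> 0" by (simp_all only: of_nat_eq_0_iff)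
    have c1: "32 * of_nat (n+1) * cc (Suc n) = 8 * cc n"
      using 3 nz by (simp add: cc_Suc field_simps del: of_nat_Suc)
    have c2: "32 * of_nat (n+1) * cc (Suc n) * of_nat (16 * n^2) = 32 * of_nat n * cc (Suc p)"
      using 3 nz by (simp add: cc_Suc field_simps power2_eq_square del: of_nat_Suc) (simp add: algebra_simps)
    have c3: "32 * of_nat (n+1) * cc (Suc n) * of_nat (2 * n * (n - 1)) = cc p"
      using 3 nz by (simp add: cc_Suc field_simps del: of_nat_Suc) (simp add: algebra_simps)
    have "32 * of_nat (n+1) * y (int n + 1) = K (32 * of_nat (n+1) * cc (Suc n)) * zeta_nat (Suc n)"
      unfolding e1 y_nat by (simp only: K_mult K_of_nat K_numeral mult.assoc)
    also have "\<dots> = K (32 * of_nat (n+1) * cc (Suc n)) * alpha * zeta_nat n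
       + (if even n then K (32 * of_nat (n+1) * cc (Suc n) * of_nat (16 * n^2)) else 0) * zeta_nat (n-1)
       + K (32 * of_nat (n+1) * cc (Suc n) * of_nat (2 * n * (n - 1))) * gamma * zeta_nat (n-2)"
      unfolding zrec by (cases "even n") (simp_all only: if_True if_False K_mult K_of_nat algebra_simps mult_zero_left mult_zero_right add_0_right add_0_left)
    also have "\<dots> = 8 * alpha * y (int n)
   + (if even n then 32 * of_nat n * y (int n - 1) else 0) + gamma * y (int n - 2)"
      unfolding c2 c3 unfolding c1 e1 y_nat using 3 by (cases "even n") (simp_all only: K_mult K_of_nat K_numeral ac_simps if_True if_False mult_zero_left add_0_right diff_Suc_1 diff_Suc_Suc minus_nat.diff_0 One_nat_def numeral_2_eq_2)
    finally show ?thesis .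
  qed
qed

lemma y_neg: "j < 0 \<Longrightarrow> y j = 0" by (simp add: y_def)

lemma y_in_J: "m \<le> j \<Longrightarrow> y (int j) \<in> J (int m)"
  unfolding y_nat by (rule J_mult, rule zeta_in_J)

section \<open>Fourier coefficients\<close>

fun F :: "nat \<Rightarrow> int \<Rightarrow> complex" where
  "F 0 l = (if l = 0 then 1 else 0)"
| "F (Suc 0) l = ((if l = 1 then 1 else 0) - (if l = -1 then 1 else 0)) / (4*\<i>)"
| "F (Suc (Suc j)) l = (2 * F j l - F j (l-1) - F j (l+1)) / 4"

definition T2 :: "(int \<Rightarrow> complex) \<Rightarrow> int \<Rightarrow> complex" where
  "T2 f l = (2 * f l - f (l-1) - f (l+1)) / 4"

lemma F_T2: "F (Suc (Suc j)) l = T2 (F j) l" by (simp add: T2_def)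

lemma FS_abs:
  assumes "\<And>x. g x - h x = (f (x-1) - f (x+1)) / (4*\<i>)"
  shows "(T2 f (l-1) - T2 f (l+1)) / (4*\<i>) = T2 g l - T2 h l"
proof -
  have "T2 g l - T2 h l = (2 * (g l - h l) - (g (l-1) - h (l-1)) - (g (l+1) - h (l+1))) / 4"
    by (simp add: T2_def field_simps)
  also have "\<dots> = (2 * ((f (l-1) - f (l+1)) / (4*\<i>)) - ((f (l-1-1) - f (l-1+1)) / (4*\<i>))
     - ((f (l+1-1) - f (l+1+1)) / (4*\<i>))) / 4"
    by (simp only: assms)
  finally have eq: "T2 g l - T2 h l = \<dots>" .
  show ?thesis unfolding eq by (simp add: T2_def field_simps)
qed

lemma F1_vals: "F (Suc 0) l = (if l = 1 then 1/(4*\<i>) else if l = -1 then -1/(4*\<i>) else 0)"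
  by auto

lemma FS: "(F j (l-1) - F j (l+1)) / (4*\<i>) = F (Suc j) l - (if odd j then F (Suc (Suc (Suc j))) l else 0)"
proof (induction j arbitrary: l rule: less_induct)
  case (less j)
  consider "j = 0" | "j = 1" | k where "j = Suc (Suc k)" by (cases j; cases "j - 1") auto
  then show ?case
  proof cases
    case 1
    then show ?thesis by (auto simp: field_simps)
  next
    case 2
    have "l = -2 \<or> l = -1 \<or> l = 0 \<or> l = 1 \<or> l = 2 \<or> l < -2 \<or> l > 2" by arith
    then show ?thesis using 2 by (elim disjE) (auto simp: field_simps)
  next
    case 3
    have IH: "\<And>x. F (Suc k) x - (if odd k then F (Suc (Suc (Suc k))) x else 0) = (F k (x-1) - F k (x+1)) / (4*\<i>)"
      using less.IH[of k] 3 by auto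
    have "(F j (l-1) - F j (l+1)) / (4*\<i>) = (T2 (F k) (l-1) - T2 (F k) (l+1)) / (4*\<i>)"
      using 3 by (simp only: F_T2)
    also have "\<dots> = T2 (F (Suc k)) l - T2 (\<lambda>x. if odd k then F (Suc (Suc (Suc k))) x else 0) l"
      by (rule FS_abs) (rule IH)
    also have "\<dots> = F (Suc j) l - (if odd j then F (Suc (Suc (Suc j))) l else 0)"
      using 3 by (cases "odd k") (simp_all only: F_T2 T2_def, simp_all)
    finally show ?thesis .
  qed
qed

lemma FD_abs:
  fixes f g h :: "int \<Rightarrow> complex" and a c :: complex
  assumes h1: "\<And>x. 2*\<i>*of_int x * f x = a * g x - c * (a+1) * h x"
    and h2: "\<And>x. (f (x-1) - f (x+1)) / (4*\<i>) = h x - c * T2 h x"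
    and h3: "\<And>x. a * T2 g x = a * h x"
  shows "2*\<i>*of_int l * T2 f l = (a+2) * h l - c * (a+3) * T2 h l"
proof -
  have "2*\<i>*of_int l * T2 f l = (2 * (2*\<i>*of_int l * f l) - (2*\<i>*of_int (l-1) * f (l-1))
      - (2*\<i>*of_int (l+1) * f (l+1))) / 4 - 2*\<i>*(f (l-1) - f (l+1)) / 4"
    by (simp add: T2_def field_simps)
  also have "\<dots> = (2 * (a * g l - c * (a+1) * h l) - (a * g (l-1) - c * (a+1) * h (l-1))
      - (a * g (l+1) - c * (a+1) * h (l+1))) / 4 - 2*\<i>*(4*\<i>*((f (l-1) - f (l+1)) / (4*\<i>))) / 4"
    by (simp only: h1) simp
  also have "\<dots> = a * T2 g l - c * (a+1) * T2 h l + 2 * (h l - c * T2 h l)"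
    by (simp only: h2) (simp add: T2_def field_simps)
  also have "\<dots> = (a+2) * h l - c * (a+3) * T2 h l"
    by (simp only: h3) (simp add: algebra_simps)
  finally show ?thesis .
qed

lemma FD: "2*\<i>*of_int l * F j l = of_nat j * F (j-1) l - (if odd j then of_nat (Suc j) * F (Suc j) l else 0)"
proof (induction j arbitrary: l rule: less_induct)
  case (less j)
  consider "j = 0" | "j = 1" | k where "j = Suc (Suc k)" by (cases j; cases "j - 1") auto
  then show ?case
  proof cases
    case 1
    then show ?thesis by auto
  next
    case 2
    have "l = -2 \<or> l = -1 \<or> l = 0 \<or> l = 1 \<or> l = 2 \<or> l < -2 \<or> l > 2" by arith
    then show ?thesis using 2 by (elim disjE) (auto simp: field_simps)
  next
    case 3
    define c :: complex where "c = (if odd k then 1 else 0)"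
    have h1: "\<And>x. 2*\<i>*of_int x * F k x = of_nat k * F (k-1) x - c * (of_nat k+1) * F (Suc k) x"
      using less.IH[of k] 3 by (simp add: c_def)
    have h2: "\<And>x. (F k (x-1) - F k (x+1)) / (4*\<i>) = F (Suc k) x - c * T2 (F (Suc k)) x"
      using FS[of k] by (simp add: c_def F_T2[symmetric])
    have h3: "\<And>x. of_nat k * T2 (F (k-1)) x = of_nat k * F (Suc k) x"
      by (cases k) (simp_all add: F_T2[symmetric])
    have "2*\<i>*of_int l * F j l = 2*\<i>*of_int l * T2 (F k) l" using 3 by (simp only: F_T2)
    also have "\<dots> = (of_nat k+2) * F (Suc k) l - c * (of_nat k+3) * T2 (F (Suc k)) l"
      by (rule FD_abs[OF h1 h2 h3])
    also have "\<dots> = of_nat j * F (j-1) l - (if odd j then of_nat (Suc j) * F (Suc j) l else 0)"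
      using 3 by (simp add: c_def F_T2 algebra_simps del: F.simps)
    finally show ?thesis .
  qed
qed

lemma FZ: "int j + 1 < 2 * \<bar>l\<bar> \<Longrightarrow> F j l = 0"
proof (induction j arbitrary: l rule: less_induct)
  case (less j)
  consider "j = 0" | "j = 1" | k where "j = Suc (Suc k)" by (cases j; cases "j - 1") auto
  then show ?case
  proof cases
    case 1 then show ?thesis using less.prems by auto
  next
    case 2 then show ?thesis using less.prems by auto
  next
    case 3
    have a: "int k + 1 < 2*\<bar>l\<bar>" "int k + 1 < 2*\<bar>l-1\<bar>" "int k+1 < 2*\<bar>l+1\<bar>"
      using less.prems 3 by arith+
    have "F k l = 0" "F k (l-1) = 0" "F k (l+1) = 0"
      using less.IH[of k] a 3 by auto
    then show ?thesis using 3 by simp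
  qed
qed

lemma FT: "F (2*M+1) (int M + 1) = (1/(4*\<i>)) * (-1/4)^M \<and> F (2*M+1) (-(int M + 1)) = -(1/(4*\<i>)) * (-1/4)^M"
proof (induction M)
  case 0
  then show ?case by simp
next
  case (Suc M)
  have z: "F (2*M+1) (int M + 2) = 0" "F (2*M+1) (int M + 3) = 0"
     "F (2*M+1) (-(int M + 2)) = 0" "F (2*M+1) (-(int M + 3)) = 0"
    by (rule FZ, simp)+
  have e: "2 * Suc M + 1 = Suc (Suc (2*M+1))" by simp
  show ?case unfolding e F.simps(3)
    using Suc z by (simp add: algebra_simps)
qed


section \<open>The Fourier sequence b\<close>

definition lam0 :: "complex poly poly" where "lam0 = 32 * alpha + 2 * gamma"

definition bb :: "nat \<Rightarrow> int \<Rightarrow> complex poly poly" where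
  "bb m l = (\<Sum>j<m. K (F j l) * y (int j))"

definition Phi :: "nat \<Rightarrow> int \<Rightarrow> complex poly poly" where
  "Phi m l = K (256*\<i>*of_int l) * bb m l - lam0 * bb m l + gamma * (bb m (l-1) + bb m (l+1))"

definition Cl :: "nat \<Rightarrow> int \<Rightarrow> complex poly poly" where
  "Cl m l = K (F (m-1) l) * (- 128 * of_nat m * y (int m))
     + K (F m l) * (- (if even m then 128 * of_nat m * y (int m - 1) else 0) - 4 * gamma * y (int m - 2))
     + K (F (Suc m) l) * (- 4 * gamma * y (int m - 1))"

lemma bb_Suc: "bb (Suc m) l = bb m l + K (F m l) * y (int m)"
  by (simp add: bb_def)

lemma Phi_closed: "Phi m l = Cl m l"
proof (induction m)
  case 0
  then show ?case by (simp add: Phi_def Cl_def bb_def y_def)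
next
  case (Suc m)
  define Br where "Br = K (256*\<i>*of_int l) * K (F m l) - lam0 * K (F m l)
      + gamma * (K (F m (l-1)) + K (F m (l+1)))"
  have s1: "Phi (Suc m) l = Phi m l + y (int m) * Br"
    unfolding Phi_def bb_Suc Br_def by (simp add: algebra_simps)
  have fD: "K (256*\<i>*of_int l) * K (F m l) = 128 * of_nat m * K (F (m-1) l)
      - (if odd m then 128 * of_nat (Suc m) * K (F (Suc m) l) else 0)"
  proof -
    have "K (256*\<i>*of_int l) * K (F m l) = K (128 * (2*\<i>*of_int l * F m l))"
      by (simp add: K_mult[symmetric] algebra_simps)
    also have "\<dots> = K (128 * (of_nat m * F (m-1) l - (if odd m then of_nat (Suc m) * F (Suc m) l else 0)))"
      by (simp only: FD)
    finally show ?thesis by (cases "odd m") (simp_all add: K_mult K_diff K_numeral K_of_nat algebra_simps del: of_nat_Suc)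
  qed
  have fT: "K (F m (l-1)) + K (F m (l+1)) = 2 * K (F m l) - 4 * K (F (Suc (Suc m)) l)"
  proof -
    have "F m (l-1) + F m (l+1) = 2 * F m l - 4 * F (Suc (Suc m)) l" by (simp add: field_simps)
    then have "K (F m (l-1) + F m (l+1)) = K (2 * F m l - 4 * F (Suc (Suc m)) l)" by (rule arg_cong)
    then show ?thesis by (simp only: K_add K_diff K_mult K_numeral)
  qed
  have Br: "Br = 128 * of_nat m * K (F (m-1) l)
      - (if odd m then 128 * of_nat (Suc m) * K (F (Suc m) l) else 0)
      - 32 * alpha * K (F m l) - 4 * gamma * K (F (Suc (Suc m)) l)"
    unfolding Br_def fD lam0_def by (simp only: fT) (simp add: algebra_simps)
  have yr: "32 * of_nat (m+1) * y (int m + 1) = 8 * alpha * y (int m)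
   + (if even m then 32 * of_nat m * y (int m - 1) else 0) + gamma * y (int m - 2)"
    by (rule yrec32)
  have i1: "int (Suc m) = int m + 1" "int (Suc m) - 1 = int m" "int (Suc m) - 2 = int m - 1" by auto
  have "Phi (Suc m) l - Cl (Suc m) l = 4 * K (F m l) * (32 * of_nat (m+1) * y (int m + 1) - (8 * alpha * y (int m)
   + (if even m then 32 * of_nat m * y (int m - 1) else 0) + gamma * y (int m - 2)))"
    unfolding s1 Suc.IH Br Cl_def i1 by (cases "even m") (simp_all add: algebra_simps)
  then show ?case using yr by simp
qed

lemma J_prod: "x \<in> J k \<Longrightarrow> r * x * s \<in> J k"
  by (intro J_mult J_mult2)

lemma Phi_in_J:
  assumes "even m"
  shows "Phi m l \<in> J (int m)"
proof -
  have y0: "y (int m) \<in> J (int m)" "y (int m + 1) \<in> J (int m)" "y (int m + 2) \<in> J (int m)"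
    using y_in_J[of m m] y_in_J[of m "Suc m"] y_in_J[of m "Suc (Suc m)"] by (auto simp: add.commute)
  have r1: "32 * of_nat (m+1) * y (int m + 1) = 8 * alpha * y (int m)
   + 32 * of_nat m * y (int m - 1) + gamma * y (int m - 2)"
    using yrec32[of m] assms by simp
  have r2: "32 * of_nat (m+2) * y (int m + 2) = 8 * alpha * y (int m + 1) + gamma * y (int m - 1)"
    using yrec32[of "Suc m"] assms by (simp add: algebra_simps)
  have t2: "- 128 * of_nat m * y (int m - 1) - 4 * gamma * y (int m - 2)
      = 4 * (8 * alpha * y (int m) - 32 * of_nat (m+1) * y (int m + 1))"
    using r1 by (simp add: algebra_simps)
  have t3: "- 4 * gamma * y (int m - 1) = 4 * (8 * alpha * y (int m + 1) - 32 * of_nat (m+2) * y (int m + 2))"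
    using r2 by (simp add: algebra_simps)
  have "Cl m l = K (F (m-1) l) * (- 128 * of_nat m * y (int m))
     + K (F m l) * (4 * (8 * alpha * y (int m) - 32 * of_nat (m+1) * y (int m + 1)))
     + K (F (Suc m) l) * (4 * (8 * alpha * y (int m + 1) - 32 * of_nat (m+2) * y (int m + 2)))"
    unfolding Cl_def using assms t2[symmetric] t3[symmetric] by simp
  also have "\<dots> \<in> J (int m)"
    using y0 by (intro J_add J_mult J_diff J_mult2) auto
  finally show ?thesis by (simp add: Phi_closed)
qed


lemma chain:
  fixes B :: "nat \<Rightarrow> complex poly poly" and s :: "nat \<Rightarrow> complex" and X G :: "complex poly poly"
  assumes H0: "(K (s 0) - X) * B 0 + G * B 1 \<in> J k"
    and Hs: "\<And>j. (K (s (Suc j)) - X) * B (Suc j) + G * (B (Suc (Suc j)) + B j) \<in> J k"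
    and Hk: "G * B 0 \<in> J k"
  shows "G^j * B j - (\<Prod>r<j. (X - K (s r))) * B 0 \<in> J k"
proof -
  define Q where "Q j = G^j * B j - (\<Prod>r<j. (X - K (s r))) * B 0" for j
  have "Q j \<in> J k \<and> Q (Suc j) \<in> J k" for j
  proof (induction j)
    case 0
    have "Q 0 = 0" by (simp add: Q_def)
    moreover have "Q (Suc 0) = (K (s 0) - X) * B 0 + G * B 1" by (simp add: Q_def algebra_simps)
    ultimately show ?case using H0 J_zero by simp
  next
    case (Suc j)
    have "Q (Suc (Suc j)) = G^(Suc j) * ((K (s (Suc j)) - X) * B (Suc j) + G * (B (Suc (Suc j)) + B j))
      - (K (s (Suc j)) - X) * Q (Suc j) - G^2 * Q j - G * (\<Prod>r<j. (X - K (s r))) * (G * B 0)"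
      by (simp add: Q_def algebra_simps power2_eq_square)
    also have "\<dots> \<in> J k"
    proof -
      have a1: "G^(Suc j) * ((K (s (Suc j)) - X) * B (Suc j) + G * (B (Suc (Suc j)) + B j)) \<in> J k"
        by (rule J_mult[OF Hs])
      have a2: "(K (s (Suc j)) - X) * Q (Suc j) \<in> J k" using Suc.IH by (intro J_mult) simp
      have a3: "G^2 * Q j \<in> J k" using Suc.IH by (intro J_mult) simp
      have a4: "G * (\<Prod>r<j. (X - K (s r))) * (G * B 0) \<in> J k" by (rule J_mult[OF Hk])
      show ?thesis by (rule J_diff[OF J_diff[OF J_diff[OF a1 a2] a3] a4])
    qed
    finally show ?case using Suc.IH by simp
  qed
  then show ?thesis by (simp add: Q_def)
qed

lemma roots1:
  fixes X u :: "complex poly poly"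
  assumes "finite B" "\<forall>t\<in>B. c \<noteq> g t" "(X - K c) * u \<in> J k" "(\<Prod>t\<in>B. (X - K (g t))) * u \<in> J k"
  shows "u \<in> J k"
  using assms
proof (induction B arbitrary: u rule: finite_induct)
  case empty
  then show ?case by simp
next
  case (insert t B)
  define u' where "u' = (X - K (g t)) * u"
  have "(X - K c) * u' \<in> J k"
    using J_mult[OF insert.prems(2), of "X - K (g t)"] by (simp add: u'_def algebra_simps)
  moreover have "(\<Prod>t\<in>B. (X - K (g t))) * u' \<in> J k"
    using insert.prems(3) insert.hyps by (simp add: u'_def algebra_simps)
  ultimately have u': "u' \<in> J k" using insert.IH insert.prems(1) by auto
  have "K (g t - c) * u = (X - K c) * u - u'" by (simp add: u'_def K_diff algebra_simps)
  also have "\<dots> \<in> J k" using u' insert.prems(2) by (intro J_diff)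
  finally have "K (1 / (g t - c)) * (K (g t - c) * u) \<in> J k" by (rule J_mult)
  moreover have "g t - c \<noteq> 0" using insert.prems(1) by auto
  ultimately show ?case by (simp add: mult.assoc[symmetric] K_mult[symmetric])
qed

lemma roots2:
  fixes X u :: "complex poly poly"
  assumes "finite A" "finite B" "\<forall>r\<in>A. \<forall>t\<in>B. f r \<noteq> g t"
    "(\<Prod>r\<in>A. (X - K (f r))) * u \<in> J k" "(\<Prod>t\<in>B. (X - K (g t))) * u \<in> J k"
  shows "u \<in> J k"
  using assms
proof (induction A arbitrary: u rule: finite_induct)
  case empty
  then show ?case by simp
next
  case (insert r A)
  define u' where "u' = (X - K (f r)) * u"
  have "(\<Prod>r\<in>A. (X - K (f r))) * u' \<in> J k"
    using insert.prems(3) insert.hyps by (simp add: u'_def algebra_simps)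
  moreover have "(\<Prod>t\<in>B. (X - K (g t))) * u' \<in> J k"
    using J_mult[OF insert.prems(4), of "X - K (f r)"] by (simp add: u'_def algebra_simps)
  ultimately have "u' \<in> J k" using insert.IH insert.prems(1,2) by auto
  then show ?case
    using roots1[of B "f r" g X u k] insert.prems by (auto simp: u'_def)
qed


section \<open>The key fact C(m)\<close>

lemma keyC:
  assumes "M \<ge> 1"
  shows "alpha * zeta_nat (2*M - 1) \<in> J (int (2*M))"
proof -
  define m where "m = 2*M"
  obtain M' where M': "M = Suc M'" using assms by (cases M) auto
  have m1: "m - 1 = 2*M' + 1" "m = Suc (m - 1)" using M' by (auto simp: m_def)
  have em: "even m" by (simp add: m_def)
  have PJ: "\<And>l. Phi m l \<in> J (int m)" using Phi_in_J[OF em] .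
  have bz: "bb m l = 0" if "int M < \<bar>l\<bar>" for l
    unfolding bb_def
  proof (rule sum.neutral, rule ballI)
    fix j assume "j \<in> {..<m}"
    then have "int j + 1 < 2 * \<bar>l\<bar>" using that by (auto simp: m_def)
    then show "K (F j l) * y (int j) = 0" by (simp add: FZ)
  qed
  define \<rho> where "\<rho> = (1/(4*\<i>)) * (-1/4)^M'"
  have rnz: "\<rho> \<noteq> 0" by (simp add: \<rho>_def)
  have bM: "bb m (int M) = K \<rho> * y (int (m-1))"
  proof -
    have "bb m (int M) = (\<Sum>j<m-1. K (F j (int M)) * y (int j)) + K (F (m-1) (int M)) * y (int (m-1))"
      unfolding bb_def by (subst m1(2)) (simp only: sum.lessThan_Suc)
    moreover have "(\<Sum>j<m-1. K (F j (int M)) * y (int j)) = 0"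
    proof (rule sum.neutral, rule ballI)
      fix j assume "j \<in> {..<m-1}"
      then have "int j + 1 < 2 * \<bar>int M\<bar>" by (auto simp: m_def)
      then show "K (F j (int M)) * y (int j) = 0" by (simp add: FZ)
    qed
    moreover have "F (m-1) (int M) = \<rho>" using FT[of M'] m1 M' by (simp add: \<rho>_def add.commute)
    ultimately show ?thesis by simp
  qed
  have bmM: "bb m (- int M) = K (- \<rho>) * y (int (m-1))"
  proof -
    have "bb m (- int M) = (\<Sum>j<m-1. K (F j (- int M)) * y (int j)) + K (F (m-1) (- int M)) * y (int (m-1))"
      unfolding bb_def by (subst m1(2)) (simp only: sum.lessThan_Suc)
    moreover have "(\<Sum>j<m-1. K (F j (- int M)) * y (int j)) = 0"
    proof (rule sum.neutral, rule ballI)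
      fix j assume "j \<in> {..<m-1}"
      then have "int j + 1 < 2 * \<bar>- int M\<bar>" by (auto simp: m_def)
      then show "K (F j (- int M)) * y (int j) = 0" by (simp add: FZ)
    qed
    moreover have "F (m-1) (- int M) = - \<rho>"
    proof -
      have e: "- int M = -(int M' + 1)" using M' by simp
      have "F (m-1) (- int M) = F (2*M'+1) (-(int M'+1))" by (simp only: e m1(1))
      then show ?thesis using FT[of M'] by (simp add: \<rho>_def)
    qed
    ultimately show ?thesis by simp
  qed
  define Bt where "Bt j = bb m (int M - int j)" for j
  define st where "st j = 256*\<i>*(of_nat M - of_nat j)" for j :: nat
  have top: "gamma^j * Bt j - (\<Prod>r<j. (lam0 - K (st r))) * Bt 0 \<in> J (int m)" for j
  proof (rule chain)
    have "(K (st 0) - lam0) * Bt 0 + gamma * Bt 1 = Phi m (int M)"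
      unfolding Phi_def Bt_def st_def using bz[of "int M + 1"] by (simp add: algebra_simps)
    then show "(K (st 0) - lam0) * Bt 0 + gamma * Bt 1 \<in> J (int m)" using PJ by simp
  next
    fix j
    have e: "int M - int (Suc j) - 1 = int M - int (Suc (Suc j))" "int M - int (Suc j) + 1 = int M - int j"
      "(of_int (int M - int (Suc j)) :: complex) = of_nat M - of_nat (Suc j)" by auto
    have "(K (st (Suc j)) - lam0) * Bt (Suc j) + gamma * (Bt (Suc (Suc j)) + Bt j) = Phi m (int M - int (Suc j))"
      unfolding Phi_def Bt_def st_def e by (simp add: algebra_simps)
    then show "(K (st (Suc j)) - lam0) * Bt (Suc j) + gamma * (Bt (Suc (Suc j)) + Bt j) \<in> J (int m)"
      using PJ by simp
  next
    have "gamma * Bt 0 = Phi m (int M + 1)"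
      unfolding Phi_def Bt_def using bz[of "int M + 1"] bz[of "int M + 2"] by (simp add: algebra_simps)
    then show "gamma * Bt 0 \<in> J (int m)" using PJ by simp
  qed
  have hkt: "gamma * Bt 0 \<in> J (int m)"
  proof -
    have "gamma * Bt 0 = Phi m (int M + 1)"
      unfolding Phi_def Bt_def using bz[of "int M + 1"] bz[of "int M + 2"] by (simp add: algebra_simps)
    then show ?thesis using PJ by simp
  qed
  define Bb where "Bb j = bb m (- int M + int j)" for j
  define sb where "sb j = 256*\<i>*(of_nat j - of_nat M)" for j :: nat
  have bot: "gamma^j * Bb j - (\<Prod>r<j. (lam0 - K (sb r))) * Bb 0 \<in> J (int m)" for j
  proof (rule chain)
    have "(K (sb 0) - lam0) * Bb 0 + gamma * Bb 1 = Phi m (- int M)"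
      unfolding Phi_def Bb_def sb_def using bz[of "- int M - 1"] by (simp add: algebra_simps)
    then show "(K (sb 0) - lam0) * Bb 0 + gamma * Bb 1 \<in> J (int m)" using PJ by simp
  next
    fix j
    have e: "- int M + int (Suc j) - 1 = - int M + int j" "- int M + int (Suc j) + 1 = - int M + int (Suc (Suc j))"
      "(of_int (- int M + int (Suc j)) :: complex) = of_nat (Suc j) - of_nat M" by auto
    have "(K (sb (Suc j)) - lam0) * Bb (Suc j) + gamma * (Bb (Suc (Suc j)) + Bb j) = Phi m (- int M + int (Suc j))"
      unfolding Phi_def Bb_def sb_def e by (simp add: algebra_simps)
    then show "(K (sb (Suc j)) - lam0) * Bb (Suc j) + gamma * (Bb (Suc (Suc j)) + Bb j) \<in> J (int m)"
      using PJ by simp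
  next
    have "gamma * Bb 0 = Phi m (- int M - 1)"
      unfolding Phi_def Bb_def using bz[of "- int M - 1"] bz[of "- int M - 2"] by (simp add: algebra_simps)
    then show "gamma * Bb 0 \<in> J (int m)" using PJ by simp
  qed
  have hkb: "gamma * Bb 0 \<in> J (int m)"
  proof -
    have "gamma * Bb 0 = Phi m (- int M - 1)"
      unfolding Phi_def Bb_def using bz[of "- int M - 1"] bz[of "- int M - 2"] by (simp add: algebra_simps)
    then show ?thesis using PJ by simp
  qed
  have Bt0: "Bt 0 = K \<rho> * y (int (m-1))" using bM by (simp add: Bt_def)
  have Bb0: "Bb 0 = K (- \<rho>) * y (int (m-1))" using bmM by (simp add: Bb_def)
  have Bt1: "Bt (M - 1) = bb m 1" "Bt (M + 1) = bb m (-1)" using assms by (auto simp: Bt_def)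
  have Bb1: "Bb (M + 1) = bb m 1" "Bb (M - 1) = bb m (-1)" using assms by (auto simp: Bb_def)
  define Pt where "Pt = (\<Prod>r<M. (lam0 - K (st r)))"
  define Pb where "Pb = (\<Prod>r<M. (lam0 - K (sb r)))"
  have Pt1: "(\<Prod>r<Suc M. (lam0 - K (st r))) = Pt * lam0" by (simp add: Pt_def st_def)
  have Pb1: "(\<Prod>r<Suc M. (lam0 - K (sb r))) = Pb * lam0" by (simp add: Pb_def sb_def)
  have A1: "(\<Prod>r<M+1. (lam0 - K (sb r))) * Bb 0 \<in> J (int m)"
  proof -
    have "(\<Prod>r<M+1. (lam0 - K (sb r))) * Bb 0 =
       gamma^2 * (gamma^(M-1) * Bt (M-1) - (\<Prod>r<M-1. (lam0 - K (st r))) * Bt 0)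
       - (gamma^(M+1) * Bb (M+1) - (\<Prod>r<M+1. (lam0 - K (sb r))) * Bb 0)
       + gamma * (\<Prod>r<M-1. (lam0 - K (st r))) * (gamma * Bt 0)"
      using Bt1 Bb1 M' by (simp add: algebra_simps power2_eq_square)
    also have "\<dots> \<in> J (int m)"
      by (rule J_add[OF J_diff[OF J_mult[OF top[of "M-1"]] bot[of "M+1"]] J_mult[OF hkt]])
    finally show ?thesis .
  qed
  have A2: "(\<Prod>r<M+1. (lam0 - K (st r))) * Bt 0 \<in> J (int m)"
  proof -
    have "(\<Prod>r<M+1. (lam0 - K (st r))) * Bt 0 =
       gamma^2 * (gamma^(M-1) * Bb (M-1) - (\<Prod>r<M-1. (lam0 - K (sb r))) * Bb 0)
       - (gamma^(M+1) * Bt (M+1) - (\<Prod>r<M+1. (lam0 - K (st r))) * Bt 0)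
       + gamma * (\<Prod>r<M-1. (lam0 - K (sb r))) * (gamma * Bb 0)"
      using Bt1 Bb1 M' by (simp add: algebra_simps power2_eq_square)
    also have "\<dots> \<in> J (int m)"
      by (rule J_add[OF J_diff[OF J_mult[OF bot[of "M-1"]] top[of "M+1"]] J_mult[OF hkb]])
    finally show ?thesis .
  qed
  define u where "u = lam0 * y (int (m-1))"
  have U1: "(\<Prod>r\<in>{..<M}. (lam0 - K (sb r))) * u \<in> J (int m)"
  proof -
    have "K (- 1 / \<rho>) * ((\<Prod>r<M+1. (lam0 - K (sb r))) * Bb 0) \<in> J (int m)" using A1 by (rule J_mult)
    moreover have "K (- 1 / \<rho>) * ((\<Prod>r<M+1. (lam0 - K (sb r))) * Bb 0) = Pb * u"
    proof -
      have "K (- 1 / \<rho>) * K (- \<rho>) = 1" using rnz by (simp add: K_mult[symmetric])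
      then show ?thesis unfolding Bb0 u_def using Pb1 by (simp add: algebra_simps)
    qed
    ultimately have "Pb * u \<in> J (int m)" by (simp only:)
    then show ?thesis by (simp only: Pb_def)
  qed
  have U2: "(\<Prod>r\<in>{..<M}. (lam0 - K (st r))) * u \<in> J (int m)"
  proof -
    have "K (1 / \<rho>) * ((\<Prod>r<M+1. (lam0 - K (st r))) * Bt 0) \<in> J (int m)" using A2 by (rule J_mult)
    moreover have "K (1 / \<rho>) * ((\<Prod>r<M+1. (lam0 - K (st r))) * Bt 0) = Pt * u"
    proof -
      have "K (1 / \<rho>) * K \<rho> = 1" using rnz by (simp add: K_mult[symmetric])
      then show ?thesis unfolding Bt0 u_def using Pt1 by (simp add: algebra_simps)
    qed
    ultimately have "Pt * u \<in> J (int m)" by (simp only:)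
    then show ?thesis by (simp only: Pt_def)
  qed
  have disj: "\<forall>r\<in>{..<M}. \<forall>t\<in>{..<M}. sb r \<noteq> st t"
  proof (intro ballI notI)
    fix r t assume rt: "r \<in> {..<M}" "t \<in> {..<M}" and eq: "sb r = st t"
    then have "(of_nat r - of_nat M :: complex) = of_nat M - of_nat t" by (simp add: sb_def st_def)
    then have "(of_nat (r + t) :: complex) = of_nat (M + M)" by (simp add: algebra_simps)
    then have "r + t = M + M" by (simp only: of_nat_eq_iff)
    then show False using rt by auto
  qed
  have uJ: "u \<in> J (int m)" using roots2[OF _ _ disj U1 U2] by simp
  have gJ: "gamma * y (int (m-1)) \<in> J (int m)"
  proof -
    have "K (1/\<rho>) * (gamma * Bt 0) \<in> J (int m)" using hkt by (rule J_mult)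
    moreover have "K (1/\<rho>) * (gamma * Bt 0) = gamma * y (int (m-1))"
    proof -
      have i: "K (1/\<rho>) * K \<rho> = 1" using rnz by (simp add: K_mult[symmetric])
      have "K (1/\<rho>) * (gamma * Bt 0) = gamma * ((K (1/\<rho>) * K \<rho>) * y (int (m-1)))"
        unfolding Bt0 by (simp only: ac_simps)
      then show ?thesis using i by simp
    qed
    ultimately show ?thesis by (simp only:)
  qed
  have "32 * alpha * y (int (m-1)) = u - 2 * (gamma * y (int (m-1)))"
    by (simp add: u_def lam0_def algebra_simps)
  also have "\<dots> \<in> J (int m)" by (rule J_diff[OF uJ J_mult[OF gJ]])
  finally have "K (1 / (32 * cc (m-1))) * (32 * alpha * y (int (m-1))) \<in> J (int m)" by (rule J_mult)
  moreover have "K (1 / (32 * cc (m-1))) * (32 * alpha * y (int (m-1))) = alpha * zeta_nat (m-1)"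
  proof -
    have "K (1 / (32 * cc (m-1))) * 32 * K (cc (m-1)) = 1"
      using cc_nz[of "m-1"] by (simp add: K_mult[symmetric] K_numeral[symmetric])
    then show ?thesis unfolding y_nat by (simp add: algebra_simps)
  qed
  ultimately have "alpha * zeta_nat (m-1) \<in> J (int m)" by (simp only:)
  then show ?thesis by (simp add: m_def)
qed


definition E :: "complex poly \<Rightarrow> complex poly poly" where "E p = [:p:]"

lemma E_add: "E (a + b) = E a + E b" by (simp add: E_def)
lemma E_mult: "E (a * b) = E a * E b" by (simp add: E_def)
lemma E_diff: "E (a - b) = E a - E b" by (simp add: E_def)
lemma E_minus: "E (- a) = - E a" by (simp add: E_def)
lemma E_0[simp]: "E 0 = 0" by (simp add: E_def)
lemma E_X: "E [:0,1:] = alpha" by (simp add: E_def alpha_def)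
lemma E_const: "E [:c:] = K c" by (simp add: E_def K_def)
lemma E_smult: "E (smult c p) = K c * E p" by (simp add: E_def K_def)
lemma E_1[simp]: "E 1 = 1" by (simp add: E_def one_pCons)
lemma E_of_nat: "E (of_nat n) = of_nat n"
  by (induction n) (simp_all add: E_add)
lemma E_power: "E (a ^ n) = E a ^ n"
  by (induction n) (simp_all add: E_mult)

lemma decomp: "\<exists>a1. a = E (coeff a 0) + gamma * a1"
proof -
  obtain c q where a: "a = pCons c q" by (cases a) auto
  have "a = E (coeff a 0) + gamma * q"
    unfolding a by (simp add: E_def gamma_def add_pCons[symmetric])
  then show ?thesis by blast
qed

lemma coeff_alpha0: "coeff alpha 0 = [:0,1:]" by (simp add: alpha_def)
lemma coeff_gamma0: "coeff gamma 0 = 0" by (simp add: gamma_def)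
lemma coeff_of_nat0: "coeff (of_nat n :: complex poly poly) 0 = of_nat n"
  by (induction n) (simp_all add: one_pCons)

definition p :: "nat \<Rightarrow> complex poly" where "p k = coeff (zeta_nat k) 0"

lemma prec: "p (Suc k) = [:0,1:] * p k + (if even k then of_nat (16*k^2) else 0) * p (k-1)"
  unfolding p_def zrec[of k]
  by (cases "even k") (simp_all only: if_True if_False coeff_add coeff_mult_0 coeff_alpha0 coeff_gamma0 coeff_of_nat0 mult_zero_left mult_zero_right add_0_right coeff_0)

lemma p_pos: "\<exists>s::real. poly (p k) 1 = complex_of_real s \<and> s \<ge> 1"
proof (induction k rule: less_induct)
  case (less k)
  show ?case
  proof (cases k)
    case 0
    then show ?thesis by (simp add: p_def)
  next
    case (Suc j)
    obtain s where s: "poly (p j) 1 = complex_of_real s" "s \<ge> 1" using less.IH[of j] Suc by auto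
    have jl: "j - 1 < k" using Suc by simp
    obtain s' where s': "poly (p (j-1)) 1 = complex_of_real s'" "s' \<ge> 1"
      using less.IH[OF jl] by blast
    define c :: real where "c = (if even j then real (16*j^2) else 0)"
    have "poly (p k) 1 = complex_of_real (s + c * s')"
      unfolding Suc prec using s s' by (simp add: c_def)
    moreover have "c \<ge> 0" by (simp add: c_def)
    then have "s + c * s' \<ge> 1" using s s' by (simp add: add_increasing2)
    ultimately show ?thesis by blast
  qed
qed

lemma p_nz: "p k \<noteq> 0"
proof
  assume "p k = 0"
  then show False using p_pos[of k] by auto
qed

lemma zeta_int1: "zeta (int n + 1) = zeta_nat (n+1)"
  by (simp add: zeta_def nat_add_distrib)
lemma zeta_int2: "zeta (int n + 2) = zeta_nat (n+2)"
  by (simp add: zeta_def nat_add_distrib)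


context
  fixes r :: nat
  assumes r_odd: "odd r"
begin

lemma zr7: "zeta_nat (r+7) = alpha * zeta_nat (r+6) + of_nat (2*(r+6)*(r+5)) * gamma * zeta_nat (r+4)"
proof -
  have e: "r + 7 = Suc (r+6)" by simp
  show ?thesis unfolding e zrec using r_odd by (simp add: ac_simps)
qed
lemma zr6: "zeta_nat (r+6) = alpha * zeta_nat (r+5) + of_nat (16*(r+5)^2) * zeta_nat (r+4) + of_nat (2*(r+5)*(r+4)) * gamma * zeta_nat (r+3)"
proof -
  have e: "r + 6 = Suc (r+5)" by simp
  show ?thesis unfolding e zrec using r_odd by (simp add: ac_simps)
qed
lemma zr5: "zeta_nat (r+5) = alpha * zeta_nat (r+4) + of_nat (2*(r+4)*(r+3)) * gamma * zeta_nat (r+2)"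
proof -
  have e: "r + 5 = Suc (r+4)" by simp
  show ?thesis unfolding e zrec using r_odd by (simp add: ac_simps)
qed
lemma zr4: "zeta_nat (r+4) = alpha * zeta_nat (r+3) + of_nat (16*(r+3)^2) * zeta_nat (r+2) + of_nat (2*(r+3)*(r+2)) * gamma * zeta_nat (r+1)"
proof -
  have e: "r + 4 = Suc (r+3)" by simp
  show ?thesis unfolding e zrec using r_odd by (simp add: ac_simps)
qed
lemma zr3: "zeta_nat (r+3) = alpha * zeta_nat (r+2) + of_nat (2*(r+2)*(r+1)) * gamma * zeta_nat r"
proof -
  have e: "r + 3 = Suc (r+2)" by simp
  show ?thesis unfolding e zrec using r_odd by (simp add: ac_simps)
qed

lemma pr7: "p (r+7) = [:0,1:] * p (r+6)"
proof -
  have e: "r + 7 = Suc (r+6)" by simp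
  show ?thesis unfolding e prec using r_odd by (simp add: ac_simps)
qed
lemma pr6: "p (r+6) = ([:0,1:]^2 + of_nat (16*(r+5)^2)) * p (r+4)"
proof -
  have e: "r + 6 = Suc (r+5)" "r + 5 = Suc (r+4)" by simp_all
  have "p (r+6) = [:0,1:] * p (r+5) + of_nat (16*(r+5)^2) * p (r+4)"
    unfolding e(1) prec using r_odd by (simp add: ac_simps)
  also have "p (r+5) = [:0,1:] * p (r+4)" unfolding e(2) prec using r_odd by (simp add: ac_simps)
  finally show ?thesis by (simp only: algebra_simps power2_eq_square)
qed
lemma pr5: "p (r+5) = [:0,1:] * p (r+4)"
proof -
  have e: "r + 5 = Suc (r+4)" by simp
  show ?thesis unfolding e prec using r_odd by (simp add: ac_simps)
qed
lemma pr4: "p (r+4) = ([:0,1:]^2 + of_nat (16*(r+3)^2)) * p (r+2)"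
proof -
  have e: "r + 4 = Suc (r+3)" "r + 3 = Suc (r+2)" by simp_all
  have "p (r+4) = [:0,1:] * p (r+3) + of_nat (16*(r+3)^2) * p (r+2)"
    unfolding e(1) prec using r_odd by (simp add: ac_simps)
  also have "p (r+3) = [:0,1:] * p (r+2)" unfolding e(2) prec using r_odd by (simp add: ac_simps)
  finally show ?thesis by (simp only: algebra_simps power2_eq_square)
qed
lemma pr3: "p (r+3) = [:0,1:] * p (r+2)"
proof -
  have e: "r + 3 = Suc (r+2)" by simp
  show ?thesis unfolding e prec using r_odd by (simp add: ac_simps)
qed

end


definition eta :: "nat \<Rightarrow> complex poly poly" where
  "eta r = of_nat (16*(r+5)*(r+3)) * zeta_nat (r+2) - alpha * zeta_nat (r+3)"

lemma gamma_nz: "gamma \<noteq> 0" by (simp add: gamma_def)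

lemma X_nz: "[:0, 1:] \<noteq> (0 :: complex poly)" by simp

lemma step1:
  assumes r: "odd r" and w: "gamma * w \<in> J (int (r+5))"
  shows "\<exists>A B C D E'. w = A * eta r + B * zeta_nat (r+4) + C * zeta_nat (r+5) + D * zeta_nat (r+6) + E' * zeta_nat (r+7)"
proof -
  obtain a b c where wa: "gamma * w = a * zeta_nat (r+5) + b * zeta_nat (r+6) + c * zeta_nat (r+7)"
    using w unfolding J_mem zeta_nat_int zeta_int1 zeta_int2 by (auto simp: ac_simps)
  define X :: "complex poly" where "X = [:0,1:]"
  define \<kappa> :: complex where "\<kappa> = of_nat (16*(r+5)^2)"
  have knz: "\<kappa> \<noteq> 0" unfolding \<kappa>_def by (simp only: of_nat_eq_0_iff) simp
  define \<beta> where "\<beta> = X^2 + [:\<kappa>:]"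
  have \<beta>: "X^2 + of_nat (16*(r+5)^2) = \<beta>" by (simp add: \<beta>_def \<kappa>_def of_nat_poly)
  define a0 where "a0 = coeff a 0"
  define b0 where "b0 = coeff b 0"
  define c0 where "c0 = coeff c 0"
  have "coeff (gamma * w) 0 = 0" by (simp add: coeff_mult_0 coeff_gamma0)
  then have "0 = a0 * p (r+5) + b0 * p (r+6) + c0 * p (r+7)"
    unfolding wa by (simp add: coeff_mult_0 a0_def b0_def c0_def p_def)
  moreover have P5: "p (r+5) = X * p (r+4)" unfolding X_def by (rule pr5[OF r])
  moreover have P6: "p (r+6) = \<beta> * p (r+4)" using pr6[OF r] \<beta> X_def by metis
  moreover have P7: "p (r+7) = X * \<beta> * p (r+4)" using pr7[OF r] P6 X_def by (metis mult.assoc)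
  ultimately have "(a0 * X + b0 * \<beta> + c0 * X * \<beta>) * p (r+4) = 0"
    by (simp add: algebra_simps)
  then have rel: "a0 * X + b0 * \<beta> + c0 * X * \<beta> = 0" using p_nz by simp
  define t where "t = smult (-1/\<kappa>) (a0 + c0 * \<beta> + b0 * X)"
  have "smult \<kappa> b0 = - (X * (a0 + c0 * \<beta> + b0 * X))"
  proof -
    have "smult \<kappa> b0 = b0 * \<beta> - b0 * X^2" by (simp add: \<beta>_def algebra_simps)
    also have "\<dots> = - (X * (a0 + c0 * \<beta> + b0 * X))" using rel
      by (simp add: algebra_simps power2_eq_square eq_neg_iff_add_eq_0)
    finally show ?thesis .
  qed
  then have hb: "b0 = X * t"
  proof -
    assume S: "smult \<kappa> b0 = - (X * (a0 + c0 * \<beta> + b0 * X))"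
    have "b0 = smult (1/\<kappa>) (smult \<kappa> b0)" using knz by simp
    also have "\<dots> = X * t" unfolding S t_def by simp
    finally show ?thesis .
  qed
  have "X * (a0 + c0 * \<beta> + t * \<beta>) = 0" using rel unfolding hb by (simp add: algebra_simps)
  then have "a0 + c0 * \<beta> + t * \<beta> = 0" by (simp add: X_def)
  then have ha: "a0 = - (t + c0) * \<beta>" by (simp add: algebra_simps eq_neg_iff_add_eq_0)
  obtain a1 where ha1: "a = E a0 + gamma * a1" using decomp[of a] unfolding a0_def by blast
  obtain b1 where hb1: "b = E b0 + gamma * b1" using decomp[of b] unfolding b0_def by blast
  obtain c1 where hc1: "c = E c0 + gamma * c1" using decomp[of c] unfolding c0_def by blast
  have Eb: "E \<beta> = alpha^2 + of_nat (16*(r+5)^2)"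
    using \<beta> by (metis E_add E_power E_X E_of_nat X_def)
  have Ea: "E a0 = - (E t + E c0) * (alpha^2 + of_nat (16*(r+5)^2))"
    unfolding ha by (simp add: E_mult E_add E_minus E_diff Eb)
  have Ebb: "E b0 = alpha * E t" unfolding hb X_def by (simp only: E_mult E_X)
  define G :: nat where "G = r + 5"
  define Wt where "Wt = (- of_nat (2*G*(G-1)) * (E t + E c0)) * eta r + (of_nat (2*G*(G+1)) * E c0) * zeta_nat (r+4)
     + a1 * zeta_nat (r+5) + b1 * zeta_nat (r+6) + c1 * zeta_nat (r+7)"
  have "gamma * w = (E a0 + gamma * a1) * zeta_nat (r+5) + (E b0 + gamma * b1) * zeta_nat (r+6) + (E c0 + gamma * c1) * zeta_nat (r+7)"
    using wa ha1 hb1 hc1 by simp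
  also have "\<dots> = gamma * Wt"
    unfolding Ea Ebb Wt_def G_def eta_def zr7[OF r] zr6[OF r] zr5[OF r]
    by (simp add: algebra_simps power2_eq_square)
  finally have "w = Wt" using gamma_nz by simp
  then show ?thesis unfolding Wt_def by blast
qed


lemma J_comb9:
  assumes "x1 \<in> J k" "x2 \<in> J k" "x3 \<in> J k" "x4 \<in> J k" "x5 \<in> J k" "x6 \<in> J k" "x7 \<in> J k" "x8 \<in> J k" "x9 \<in> J k"
  shows "c1 * x1 + c2 * x2 + c3 * x3 + c4 * x4 + c5 * x5 + c6 * x6 + c7 * x7 + c8 * x8 + c9 * x9 \<in> J k"
  by (rule J_add[OF J_add[OF J_add[OF J_add[OF J_add[OF J_add[OF J_add[OF J_add[OF J_mult[OF assms(1)]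
     J_mult[OF assms(2)]] J_mult[OF assms(3)]] J_mult[OF assms(4)]] J_mult[OF assms(5)]] J_mult[OF assms(6)]]
     J_mult[OF assms(7)]] J_mult[OF assms(8)]] J_mult[OF assms(9)]])

lemma step2:
  assumes r: "odd r"
    and u: "gamma * u = A * eta r + B * zeta_nat (r+4) + C * zeta_nat (r+5) + D * zeta_nat (r+6) + E' * zeta_nat (r+7)"
  shows "u \<in> J (int (r+1))"
proof -
  define X :: "complex poly" where "X = [:0,1:]"
  define \<kappa>1 :: complex where "\<kappa>1 = of_nat (16*(r+5)*(r+3))"
  define \<kappa>2 :: complex where "\<kappa>2 = of_nat (16*(r+3)^2)"
  define \<kappa>b :: complex where "\<kappa>b = of_nat (16*(r+5)^2)"
  have k3nz: "\<kappa>1 + \<kappa>2 \<noteq> 0"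
  proof -
    have "\<kappa>1 + \<kappa>2 = of_nat (16*(r+5)*(r+3) + 16*(r+3)^2)" by (simp add: \<kappa>1_def \<kappa>2_def)
    also have "\<dots> \<noteq> 0" by (simp only: of_nat_eq_0_iff) simp
    finally show ?thesis .
  qed
  define e0 where "e0 = [:\<kappa>1:] - X^2"
  define f0 where "f0 = X^2 + [:\<kappa>2:]"
  define \<beta> where "\<beta> = X^2 + [:\<kappa>b:]"
  have f0nz: "f0 \<noteq> 0"
  proof
    assume "f0 = 0"
    then have "poly f0 0 = 0" by simp
    moreover have "poly f0 0 = \<kappa>2" by (simp add: f0_def X_def)
    moreover have "\<kappa>2 \<noteq> 0" unfolding \<kappa>2_def by (simp only: of_nat_eq_0_iff) simp
    ultimately show False by simp
  qed
  define A0 where "A0 = coeff A 0"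
  define B0 where "B0 = coeff B 0"
  define C0 where "C0 = coeff C 0"
  define D0 where "D0 = coeff D 0"
  define F0 where "F0 = coeff E' 0"
  have P3: "p (r+3) = X * p (r+2)" unfolding X_def by (rule pr3[OF r])
  have P4: "p (r+4) = f0 * p (r+2)" using pr4[OF r] unfolding f0_def X_def \<kappa>2_def by (simp add: of_nat_poly)
  have P5: "p (r+5) = X * f0 * p (r+2)" using pr5[OF r] P4 X_def by (metis mult.assoc)
  have P6: "p (r+6) = \<beta> * f0 * p (r+2)" using pr6[OF r] P4 unfolding \<beta>_def X_def \<kappa>b_def by (simp add: of_nat_poly)
  have P7: "p (r+7) = X * \<beta> * f0 * p (r+2)" using pr7[OF r] P6 X_def by (metis mult.assoc)
  have ceta: "coeff (eta r) 0 = e0 * p (r+2)"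
  proof -
    have "coeff (eta r) 0 = of_nat (16*(r+5)*(r+3)) * p (r+2) - X * p (r+3)"
      unfolding eta_def p_def X_def by (simp only: coeff_diff coeff_mult_0 coeff_alpha0 coeff_of_nat0)
    also have "\<dots> = (of_nat (16*(r+5)*(r+3)) - X^2) * p (r+2)"
      unfolding P3 by (simp only: algebra_simps power2_eq_square)
    also have "of_nat (16*(r+5)*(r+3)) = [:\<kappa>1:]" unfolding \<kappa>1_def by (rule of_nat_poly)
    finally show ?thesis unfolding e0_def .
  qed
  have "coeff (gamma * u) 0 = 0" by (simp add: coeff_mult_0 coeff_gamma0)
  then have "0 = A0 * (e0 * p (r+2)) + B0 * p (r+4) + C0 * p (r+5) + D0 * p (r+6) + F0 * p (r+7)"
    unfolding u by (simp add: coeff_mult_0 A0_def B0_def C0_def D0_def F0_def p_def ceta[unfolded p_def])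
  then have "(A0 * e0 + f0 * (B0 + C0 * X + D0 * \<beta> + F0 * X * \<beta>)) * p (r+2) = 0"
    unfolding P4 P5 P6 P7 by (simp add: algebra_simps)
  then have rel: "A0 * e0 + f0 * (B0 + C0 * X + D0 * \<beta> + F0 * X * \<beta>) = 0" using p_nz by simp
  define Y where "Y = B0 + C0 * X + D0 * \<beta> + F0 * X * \<beta>"
  define s where "s = smult (1/(\<kappa>1 + \<kappa>2)) (A0 - Y)"
  have ef: "e0 + f0 = [:\<kappa>1 + \<kappa>2:]" by (simp add: e0_def f0_def)
  have "smult (\<kappa>1 + \<kappa>2) A0 = f0 * (A0 - Y)"
  proof -
    have "smult (\<kappa>1 + \<kappa>2) A0 = A0 * (e0 + f0)" unfolding ef by simp
    also have "\<dots> = f0 * (A0 - Y)" using rel unfolding Y_def by (simp add: algebra_simps eq_neg_iff_add_eq_0)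
    finally show ?thesis .
  qed
  then have hA: "A0 = f0 * s"
  proof -
    assume S: "smult (\<kappa>1 + \<kappa>2) A0 = f0 * (A0 - Y)"
    have "A0 = smult (1/(\<kappa>1 + \<kappa>2)) (smult (\<kappa>1 + \<kappa>2) A0)" using k3nz by simp
    also have "\<dots> = f0 * s" unfolding S s_def by simp
    finally show ?thesis .
  qed
  have "f0 * (s * e0 + Y) = 0" using rel unfolding hA Y_def by (simp add: algebra_simps)
  then have "s * e0 + Y = 0" using f0nz by simp
  then have hB: "B0 = - s * e0 - C0 * X - D0 * \<beta> - F0 * X * \<beta>"
    unfolding Y_def by (simp add: algebra_simps eq_neg_iff_add_eq_0)
  obtain A1 where hA1: "A = E A0 + gamma * A1" using decomp[of A] unfolding A0_def by blast
  obtain B1 where hB1: "B = E B0 + gamma * B1" using decomp[of B] unfolding B0_def by blast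
  obtain C1 where hC1: "C = E C0 + gamma * C1" using decomp[of C] unfolding C0_def by blast
  obtain D1 where hD1: "D = E D0 + gamma * D1" using decomp[of D] unfolding D0_def by blast
  obtain F1 where hF1: "E' = E F0 + gamma * F1" using decomp[of E'] unfolding F0_def by blast
  have EX: "E X = alpha" by (simp add: X_def E_X)
  have Ef: "E f0 = alpha^2 + of_nat (16*(r+3)^2)"
    by (simp only: f0_def E_add E_power EX E_const \<kappa>2_def K_of_nat)
  have Ee: "E e0 = of_nat (16*(r+5)*(r+3)) - alpha^2"
    by (simp only: e0_def E_diff E_power EX E_const \<kappa>1_def K_of_nat)
  have Eb: "E \<beta> = alpha^2 + of_nat (16*(r+5)^2)"
    by (simp only: \<beta>_def E_add E_power EX E_const \<kappa>b_def K_of_nat)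
  define S where "S = E s"
  have EA: "E A0 = (alpha^2 + of_nat (16*(r+3)^2)) * S"
    unfolding hA S_def by (simp only: E_mult Ef)
  have EB: "E B0 = - S * (of_nat (16*(r+5)*(r+3)) - alpha^2) - E C0 * alpha
      - E D0 * (alpha^2 + of_nat (16*(r+5)^2)) - E F0 * alpha * (alpha^2 + of_nat (16*(r+5)^2))"
    unfolding hB S_def by (simp only: E_mult E_diff E_minus Ee Eb EX)
  define c1 where "c1 = - S * ((alpha^2 + of_nat (16*(r+3)^2)) + (of_nat (16*(r+5)*(r+3)) - alpha^2)) * of_nat (2*(r+2)*(r+1))"
  define c2 where "c2 = - S * (of_nat (16*(r+5)*(r+3)) - alpha^2) * of_nat (2*(r+3)*(r+2))"
  define c3 where "c3 = E C0 * of_nat (2*(r+4)*(r+3)) + E D0 * of_nat (2*(r+4)*(r+3)) * alpha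
     + E F0 * alpha * alpha * of_nat (2*(r+4)*(r+3))"
  define c4 where "c4 = E D0 * of_nat (2*(r+5)*(r+4)) + E F0 * alpha * of_nat (2*(r+5)*(r+4))"
  define c5 where "c5 = E F0 * of_nat (2*(r+6)*(r+5)) + B1"
  define Ut where "Ut = c1 * (alpha * zeta_nat r) + c2 * zeta_nat (r+1) + c3 * zeta_nat (r+2) + c4 * zeta_nat (r+3)
     + c5 * zeta_nat (r+4) + C1 * zeta_nat (r+5) + D1 * zeta_nat (r+6) + F1 * zeta_nat (r+7) + A1 * eta r"
  define bt where "bt = alpha^2 + of_nat (16*(r+5)^2)"
  define ft where "ft = alpha^2 + of_nat (16*(r+3)^2)"
  define et where "et = of_nat (16*(r+5)*(r+3)) - alpha^2"
  have I1: "zeta_nat (r+5) - alpha * zeta_nat (r+4) = gamma * (of_nat (2*(r+4)*(r+3)) * zeta_nat (r+2))"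
    unfolding zr5[OF r] by (simp add: algebra_simps)
  have I2: "zeta_nat (r+6) - bt * zeta_nat (r+4) = gamma * (of_nat (2*(r+4)*(r+3)) * alpha * zeta_nat (r+2)
      + of_nat (2*(r+5)*(r+4)) * zeta_nat (r+3))"
    unfolding bt_def zr6[OF r] zr5[OF r] by (simp add: algebra_simps power2_eq_square)
  have I3: "zeta_nat (r+7) - alpha * bt * zeta_nat (r+4) = gamma * (of_nat (2*(r+6)*(r+5)) * zeta_nat (r+4)
      + alpha * (of_nat (2*(r+4)*(r+3)) * alpha * zeta_nat (r+2) + of_nat (2*(r+5)*(r+4)) * zeta_nat (r+3)))"
  proof -
    have "zeta_nat (r+7) - alpha * bt * zeta_nat (r+4) = alpha * (zeta_nat (r+6) - bt * zeta_nat (r+4))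
        + of_nat (2*(r+6)*(r+5)) * gamma * zeta_nat (r+4)"
      unfolding zr7[OF r] by (simp add: algebra_simps)
    then show ?thesis unfolding I2 by (simp add: algebra_simps)
  qed
  have I4: "ft * eta r - et * zeta_nat (r+4) = - gamma * (alpha * (ft + et) * of_nat (2*(r+2)*(r+1)) * zeta_nat r
      + et * of_nat (2*(r+3)*(r+2)) * zeta_nat (r+1))"
    unfolding ft_def et_def eta_def zr4[OF r] zr3[OF r] by (simp add: algebra_simps power2_eq_square)
  have "gamma * u = (E A0 + gamma * A1) * eta r + (E B0 + gamma * B1) * zeta_nat (r+4)
     + (E C0 + gamma * C1) * zeta_nat (r+5) + (E D0 + gamma * D1) * zeta_nat (r+6) + (E F0 + gamma * F1) * zeta_nat (r+7)"
    using u hA1 hB1 hC1 hD1 hF1 by simp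
  also have "\<dots> = S * (ft * eta r - et * zeta_nat (r+4)) + E C0 * (zeta_nat (r+5) - alpha * zeta_nat (r+4))
     + E D0 * (zeta_nat (r+6) - bt * zeta_nat (r+4)) + E F0 * (zeta_nat (r+7) - alpha * bt * zeta_nat (r+4))
     + gamma * (A1 * eta r + B1 * zeta_nat (r+4) + C1 * zeta_nat (r+5) + D1 * zeta_nat (r+6) + F1 * zeta_nat (r+7))"
    unfolding EA EB ft_def[symmetric] et_def[symmetric] bt_def[symmetric] by (simp add: algebra_simps)
  also have "\<dots> = gamma * Ut"
    unfolding I1 I2 I3 I4 Ut_def c1_def c2_def c3_def c4_def c5_def ft_def[symmetric] et_def[symmetric]
    by (simp add: algebra_simps)
  finally have uU: "u = Ut" using gamma_nz by simp
  obtain M where M: "r + 1 = 2 * M" "M \<ge> 1" using r by (metis dvd_def even_add odd_one oddE one_add_one add_gr_0 less_one nat_le_linear not_less Suc_eq_plus1 le_add2 mult_2)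
  have key: "alpha * zeta_nat r \<in> J (int (r+1))"
    using keyC[OF M(2)] M(1) by (metis add_diff_cancel_right')
  have zJ: "zeta_nat (r+i) \<in> J (int (r+1))" if "i \<ge> 1" for i
    by (rule zeta_in_J) (use that in simp)
  have etaJ: "eta r \<in> J (int (r+1))"
    unfolding eta_def using zJ[of 2] zJ[of 3] by (intro J_diff J_mult; simp)
  show ?thesis unfolding uU Ut_def
    by (rule J_comb9[OF key zJ zJ zJ zJ zJ zJ zJ etaJ]) simp_all
qed


theorem lemma5p10:
  fixes g :: int and u :: "complex poly poly"
  assumes "even g" and "g \<ge> 2" and "gamma ^ 2 * u \<in> J g"
  shows "u \<in> J (g - 4)"
proof (cases "g \<le> 4")
  case True
  then have "g = 2 \<or> g = 4" using assms(1,2) by presburger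
  then show ?thesis
  proof
    assume g: "g = 2"
    have "u = 0 * zeta (2 - 4) + 0 * zeta (2 - 4 + 1) + u * zeta (2 - 4 + 2)"
      by (simp add: zeta_def)
    then show ?thesis unfolding g J_mem by blast
  next
    assume g: "g = 4"
    have "u = u * zeta (4 - 4) + 0 * zeta (4 - 4 + 1) + 0 * zeta (4 - 4 + 2)"
      by (simp add: zeta_def)
    then show ?thesis unfolding g J_mem by blast
  qed
next
  case False
  define r where "r = nat g - 5"
  have g: "g = int (r+5)" using False unfolding r_def by simp
  have r: "odd r"
  proof -
    have "even (int (r+5))" using assms(1) g by simp
    then have "even (r+5)" by simp
    then show ?thesis by simp
  qed
  have "gamma * (gamma * u) \<in> J (int (r+5))" using assms(3) g by (simp add: power2_eq_square mult.assoc)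
  from step1[OF r this] obtain A B C D E' where
    "gamma * u = A * eta r + B * zeta_nat (r+4) + C * zeta_nat (r+5) + D * zeta_nat (r+6) + E' * zeta_nat (r+7)"
    by blast
  then have "u \<in> J (int (r+1))" by (rule step2[OF r])
  moreover have "g - 4 = int (r+1)" using g by simp
  ultimately show ?thesis by simp
qed

end
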